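(* Let $\ell_1,\ldots,\ell_4$ be four distinct lines in $\mathbb{R}^2$ given by $L_i=0$, where $L_i=A_ix+B_iy+C_i$ (real coefficients, $(A_i,B_i)\neq(0,0)$), $i=1,\ldots,4$. Assume that no two of $\ell_1,\ell_2,\ell_3$ are parallel and that $\ell_4$ is parallel to neither $\ell_1$ nor $\ell_2$. Let $f(x,y)=L_1L_2L_3+L_4$ and let $\Gamma$ be the real algebraic cubic curve $f(x,y)=0$. Then $f$ is irreducible, and $\Gamma$ is asymptotic to each of the lines $\ell_1,\ell_2,\ell_3$. *)

theory Defs
  imports "HOL-Analysis.Analysis" "HOL-Computational_Algebra.Polynomial_Factorial"
begin

text \<open>Bivariate real polynomials are represented as elements of R[x][y], i.e. the type
  real poly poly: a polynomial in y whose coefficients are polynomials in x.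
  This ring is isomorphic to R[x,y].\<close>

definition eval2 :: "real poly poly \<Rightarrow> real \<Rightarrow> real \<Rightarrow> real" where
  "eval2 p x y = poly (map_poly (\<lambda>c. poly c x) p) y"

definition linpoly :: "real \<Rightarrow> real \<Rightarrow> real \<Rightarrow> real poly poly" where
  "linpoly A B C = [: [:C, A:], [:B:] :]"

definition line :: "real \<Rightarrow> real \<Rightarrow> real \<Rightarrow> (real \<times> real) set" where
  "line A B C = {p. A * fst p + B * snd p + C = 0}"

definition zero_set :: "real poly poly \<Rightarrow> (real \<times> real) set" where
  "zero_set f = {p. eval2 f (fst p) (snd p) = 0}"

definition parallel :: "real \<Rightarrow> real \<Rightarrow> real \<Rightarrow> real \<Rightarrow> bool" where
  "parallel A B A' B' \<longleftrightarrow> A * B' - A' * B = 0"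

definition asymptotic_to :: "(real \<times> real) set \<Rightarrow> (real \<times> real) set \<Rightarrow> bool" where
  "asymptotic_to G S \<longleftrightarrow>
     (\<exists>\<gamma> :: real \<Rightarrow> real \<times> real.
        continuous_on {0..} \<gamma> \<and> \<gamma> ` {0..} \<subseteq> G \<and>
        filterlim (\<lambda>t. norm (\<gamma> t)) at_top at_top \<and>
        ((\<lambda>t. infdist (\<gamma> t) S) \<longlongrightarrow> 0) at_top)"

end

theory Submission
  imports Defs "HOL-Real_Asymp.Real_Asymp"
begin


lemma root_exists:
  fixes a c d e g :: real
  obtains T r where "T \<ge> 1" "continuous_on {T..} r"
    "\<forall>v\<ge>T. r v * v * (a * r v + v + c) + d * r v + e * v + g = 0" "(r \<longlongrightarrow> 0) at_top"
proof -
  define \<beta> where "\<beta> v = v^2 + c * v + d" for v :: real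
  define D where "D v = (\<beta> v)^2 - 4 * a * v * (e * v + g)" for v
  define r where "r v = - 2 * (e * v + g) / (\<beta> v + sqrt (D v))" for v
  have ev1: "eventually (\<lambda>v. v^2 + c * v + d \<ge> (v::real)^2/2) at_top" by real_asymp
  have ev2: "eventually (\<lambda>v. (v^2 + c * v + d)^2 - 4 * a * v * (e * v + g) \<ge> (0::real)) at_top" by real_asymp
  from eventually_conj[OF ev1 ev2] obtain T0 where T0: "\<And>v. v \<ge> T0 \<Longrightarrow> v^2 + c * v + d \<ge> (v::real)^2/2 \<and> (v^2 + c * v + d)^2 - 4 * a * v * (e * v + g) \<ge> 0"
    unfolding eventually_at_top_linorder by blast
  define T where "T = max 1 T0"
  have T1: "T \<ge> 1" by (simp add: T_def)
  have bnd: "\<beta> v \<ge> v^2/2" "D v \<ge> 0" if "v \<ge> T" for v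
    using T0[of v] that by (auto simp: T_def \<beta>_def D_def)
  have bpos: "\<beta> v > 0" if "v \<ge> T" for v
  proof -
    have "v^2 > 0" using that T1 by simp
    then show ?thesis using bnd(1)[OF that] by linarith
  qed
  have qpos: "\<beta> v + sqrt (D v) > 0" if "v \<ge> T" for v
    using bpos[OF that] bnd(2)[OF that] by (simp add: add_pos_nonneg)
  have cont: "continuous_on {T..} r"
    unfolding r_def D_def \<beta>_def
    apply (intro continuous_intros)
    using qpos unfolding D_def \<beta>_def by (auto simp: less_imp_neq[symmetric] intro!: less_imp_neq)
  have eq: "r v * v * (a * r v + v + c) + d * r v + e * v + g = 0" if "v \<ge> T" for v
  proof -
    define s where "s = sqrt (D v)"
    define q where "q = \<beta> v + s"
    have s2: "s^2 = D v" using bnd(2)[OF that] by (simp add: s_def)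
    have q0: "q \<noteq> 0" using qpos[OF that] by (simp add: q_def s_def)
    have ru: "r v = -2 * (e * v + g) / q" by (simp add: r_def q_def s_def)
    have key: "q^2 - 2 * \<beta> v * q + 4 * a * v * (e * v + g) = 0"
      using s2 unfolding q_def D_def by (simp add: power2_eq_square algebra_simps)
    have "r v * v * (a * r v + v + c) + d * r v + e * v + g
        = (e * v + g) / q^2 * (q^2 - 2 * \<beta> v * q + 4 * a * v * (e * v + g))"
      unfolding ru \<beta>_def using q0 by (simp add: field_simps power2_eq_square)
    also have "\<dots> = 0" using key by simp
    finally show ?thesis .
  qed
  have lim: "(r \<longlongrightarrow> 0) at_top"
  proof (rule Lim_null_comparison)
    show "eventually (\<lambda>v. norm (r v) \<le> 4 * (\<bar>e\<bar> * v + \<bar>g\<bar>) / v^2) at_top"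
      using eventually_ge_at_top[of T]
    proof eventually_elim
      case (elim v)
      have vp: "v > 0" using elim T1 by simp
      have "norm (r v) = \<bar>-2\<bar> * \<bar>e * v + g\<bar> / \<bar>\<beta> v + sqrt (D v)\<bar>"
        by (simp only: r_def real_norm_def abs_divide abs_mult)
      also have "\<dots> = 2 * \<bar>e * v + g\<bar> / (\<beta> v + sqrt (D v))"
        using qpos[OF elim] by simp
      also have "\<dots> \<le> 2 * \<bar>e * v + g\<bar> / (v^2/2)"
        apply (rule divide_left_mono)
        subgoal using bnd(1)[OF elim] real_sqrt_ge_zero[OF bnd(2)[OF elim]] by linarith
        subgoal by simp
        subgoal using qpos[OF elim] vp by simp
        done
      also have "\<dots> = 4 * \<bar>e * v + g\<bar> / v^2" by simp
      also have "\<dots> \<le> 4 * (\<bar>e\<bar> * v + \<bar>g\<bar>) / v^2"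
        apply (rule divide_right_mono)
        using vp abs_triangle_ineq[of "e * v" g] by (auto simp: abs_mult)
      finally show ?case .
    qed
    show "((\<lambda>v::real. 4 * (\<bar>e\<bar> * v + \<bar>g\<bar>) / v^2) \<longlongrightarrow> 0) at_top" by real_asymp
  qed
  show ?thesis using that[OF T1 cont _ lim] eq by blast
qed

lemma lin_P:
  fixes \<Delta> :: real
  assumes "\<Delta> \<noteq> 0"
  shows "A * (((u - Ci) * Bj - (v - Cj) * Bi) / \<Delta>) + B * ((Ai * (v - Cj) - Aj * (u - Ci)) / \<Delta>) + C
     = (A * Bj - B * Aj) / \<Delta> * u + (B * Ai - A * Bi) / \<Delta> * v + ((A * (Cj * Bi - Ci * Bj) + B * (Aj * Ci - Ai * Cj)) / \<Delta> + C)"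
  using assms by (simp add: field_simps)

lemma asym_generic:
  fixes Ai Bi Ci Aj Bj Cj Ak Bk Ck A4 B4 C4 :: real
  assumes dij: "Ai * Bj - Aj * Bi \<noteq> 0" and dik: "Ai * Bk - Ak * Bi \<noteq> 0"
  shows "asymptotic_to {p. (Ai * fst p + Bi * snd p + Ci) * (Aj * fst p + Bj * snd p + Cj)
            * (Ak * fst p + Bk * snd p + Ck) + (A4 * fst p + B4 * snd p + C4) = 0} (line Ai Bi Ci)"
proof -
  define \<Delta> where "\<Delta> = Ai * Bj - Aj * Bi"
  have \<Delta>0: "\<Delta> \<noteq> 0" using dij by (simp add: \<Delta>_def)
  define P where "P u v = (((u - Ci) * Bj - (v - Cj) * Bi) / \<Delta>, (Ai * (v - Cj) - Aj * (u - Ci)) / \<Delta>)" for u v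
  define a where "a = (Ak * Bj - Bk * Aj) / \<Delta>"
  define b where "b = (Bk * Ai - Ak * Bi) / \<Delta>"
  define c where "c = (Ak * (Cj * Bi - Ci * Bj) + Bk * (Aj * Ci - Ai * Cj)) / \<Delta> + Ck"
  define d where "d = (A4 * Bj - B4 * Aj) / \<Delta>"
  define e where "e = (B4 * Ai - A4 * Bi) / \<Delta>"
  define g where "g = (A4 * (Cj * Bi - Ci * Bj) + B4 * (Aj * Ci - Ai * Cj)) / \<Delta> + C4"
  have b0: "b \<noteq> 0" using dik \<Delta>0 by (simp add: b_def algebra_simps)
  have Li: "Ai * fst (P u v) + Bi * snd (P u v) + Ci = u" for u v
  proof -
    have e1: "Ai * Bj - Bi * Aj = \<Delta>" "Bi * Ai - Ai * Bi = 0"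
      "Ai * (Cj * Bi - Ci * Bj) + Bi * (Aj * Ci - Ai * Cj) = - (Ci * \<Delta>)"
      by (simp_all add: \<Delta>_def algebra_simps)
    show ?thesis unfolding P_def fst_conv snd_conv lin_P[OF \<Delta>0] e1 using \<Delta>0 by simp
  qed
  have Lj: "Aj * fst (P u v) + Bj * snd (P u v) + Cj = v" for u v
  proof -
    have e1: "Aj * Bj - Bj * Aj = 0" "Bj * Ai - Aj * Bi = \<Delta>"
      "Aj * (Cj * Bi - Ci * Bj) + Bj * (Aj * Ci - Ai * Cj) = - (Cj * \<Delta>)"
      by (simp_all add: \<Delta>_def algebra_simps)
    show ?thesis unfolding P_def fst_conv snd_conv lin_P[OF \<Delta>0] e1 using \<Delta>0 by simp
  qed
  have Lk: "Ak * fst (P u v) + Bk * snd (P u v) + Ck = a * u + b * v + c" for u v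
    unfolding P_def fst_conv snd_conv lin_P[OF \<Delta>0] a_def b_def c_def by simp
  have L4: "A4 * fst (P u v) + B4 * snd (P u v) + C4 = d * u + e * v + g" for u v
    unfolding P_def fst_conv snd_conv lin_P[OF \<Delta>0] d_def e_def g_def by simp
  obtain T r where T1: "T \<ge> 1" and rc: "continuous_on {T..} r"
    and req: "\<forall>v\<ge>T. r v * v * (a/b * r v + v + c/b) + d/b * r v + e/b * v + g/b = 0"
    and rl: "(r \<longlongrightarrow> 0) at_top"
    by (rule root_exists)
  define \<gamma> where "\<gamma> t = P (r (T + t)) (T + t)" for t
  show ?thesis unfolding asymptotic_to_def
  proof (intro exI conjI)
    have c1: "continuous_on {0..} (\<lambda>t. r (T + t))"
      by (rule continuous_on_compose2[OF rc]) (auto intro!: continuous_intros)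
    show "continuous_on {0..} \<gamma>"
      unfolding \<gamma>_def P_def using \<Delta>0 by (intro continuous_intros c1) auto
    show "\<gamma> ` {0..} \<subseteq> {p. (Ai * fst p + Bi * snd p + Ci) * (Aj * fst p + Bj * snd p + Cj)
            * (Ak * fst p + Bk * snd p + Ck) + (A4 * fst p + B4 * snd p + C4) = 0}"
    proof (rule image_subsetI, unfold mem_Collect_eq)
      fix t :: real assume "t \<in> {0..}"
      then have tt: "T + t \<ge> T" by simp
      define u where "u = r (T + t)"
      define v where "v = T + t"
      have "u * v * (a/b * u + v + c/b) + d/b * u + e/b * v + g/b = 0"
        using req tt by (simp add: u_def v_def)
      moreover have "u * v * (a * u + b * v + c) + (d * u + e * v + g)
          = b * (u * v * (a/b * u + v + c/b) + d/b * u + e/b * v + g/b)"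
        using b0 by (simp add: field_simps)
      ultimately have "u * v * (a * u + b * v + c) + (d * u + e * v + g) = 0" by simp
      then show "(Ai * fst (\<gamma> t) + Bi * snd (\<gamma> t) + Ci) * (Aj * fst (\<gamma> t) + Bj * snd (\<gamma> t) + Cj)
            * (Ak * fst (\<gamma> t) + Bk * snd (\<gamma> t) + Ck) + (A4 * fst (\<gamma> t) + B4 * snd (\<gamma> t) + C4) = 0"
        unfolding \<gamma>_def Li Lj Lk L4 u_def v_def by simp
    qed
    define K where "K = \<bar>Aj\<bar> + \<bar>Bj\<bar> + 1"
    have K0: "K > 0" by (simp add: K_def)
    have "filterlim (\<lambda>t. (t + (T - \<bar>Cj\<bar>)) / K) at_top at_top" using K0 by real_asymp
    then show "filterlim (\<lambda>t. norm (\<gamma> t)) at_top at_top"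
    proof (rule filterlim_at_top_mono)
      show "eventually (\<lambda>t. (t + (T - \<bar>Cj\<bar>)) / K \<le> norm (\<gamma> t)) at_top"
      proof (rule always_eventually, rule allI)
        fix t
        obtain x y where xy: "\<gamma> t = (x, y)" by fastforce
        have "T + t = Aj * x + Bj * y + Cj" using Lj[of "r (T+t)" "T+t"] xy by (simp add: \<gamma>_def)
        also have "\<dots> \<le> \<bar>Aj\<bar> * \<bar>x\<bar> + \<bar>Bj\<bar> * \<bar>y\<bar> + \<bar>Cj\<bar>"
          using abs_ge_self[of "Aj * x"] abs_ge_self[of "Bj * y"] abs_ge_self[of Cj]
          unfolding abs_mult by linarith
        also have "\<dots> \<le> \<bar>Aj\<bar> * norm (x, y) + \<bar>Bj\<bar> * norm (x, y) + \<bar>Cj\<bar>"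
          using norm_fst_le[of x y] norm_snd_le[of y x]
          by (intro add_mono mult_left_mono) auto
        also have "\<dots> \<le> K * norm (x, y) + \<bar>Cj\<bar>"
          by (simp add: K_def algebra_simps)
        finally have "t + (T - \<bar>Cj\<bar>) \<le> K * norm (x, y)" by simp
        then show "(t + (T - \<bar>Cj\<bar>)) / K \<le> norm (\<gamma> t)"
          using K0 xy by (simp add: divide_le_eq mult.commute)
      qed
    qed
    have rl2: "((\<lambda>t. r (T + t)) \<longlongrightarrow> 0) at_top"
    proof (rule filterlim_compose[OF rl])
      show "filterlim (\<lambda>t. T + t) at_top at_top" by real_asymp
    qed
    define M where "M = (\<bar>Bj\<bar> + \<bar>Aj\<bar>) / \<bar>\<Delta>\<bar>"
    show "((\<lambda>t. infdist (\<gamma> t) (line Ai Bi Ci)) \<longlongrightarrow> 0) at_top"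
    proof (rule Lim_null_comparison)
      show "((\<lambda>t. \<bar>r (T + t)\<bar> * M) \<longlongrightarrow> 0) at_top"
        using tendsto_mult_right_zero[OF tendsto_rabs_zero[OF rl2], of M] by (simp add: mult.commute)
      show "eventually (\<lambda>t. norm (infdist (\<gamma> t) (line Ai Bi Ci)) \<le> \<bar>r (T + t)\<bar> * M) at_top"
      proof (rule always_eventually, rule allI)
        fix t
        define u where "u = r (T + t)"
        have mem: "P 0 (T + t) \<in> line Ai Bi Ci" using Li[of 0] by (simp add: line_def)
        have "norm (infdist (\<gamma> t) (line Ai Bi Ci)) = infdist (\<gamma> t) (line Ai Bi Ci)"
          by (simp add: infdist_nonneg)
        also have "\<dots> \<le> dist (\<gamma> t) (P 0 (T + t))" by (rule infdist_le[OF mem])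
        also have "\<dots> = norm ((u * Bj / \<Delta>, - (Aj * u) / \<Delta>))"
        proof -
          have "\<gamma> t - P 0 (T + t) = (u * Bj / \<Delta>, - (Aj * u) / \<Delta>)"
            unfolding \<gamma>_def P_def u_def by (simp add: diff_divide_distrib[symmetric] algebra_simps)
          then show ?thesis by (simp add: dist_norm)
        qed
        also have "\<dots> \<le> \<bar>u * Bj / \<Delta>\<bar> + \<bar>- (Aj * u) / \<Delta>\<bar>"
          using norm_Pair_le[of "u * Bj / \<Delta>" "- (Aj * u) / \<Delta>"] by (simp only: real_norm_def)
        also have "\<dots> = \<bar>u\<bar> * M"
          by (simp add: M_def abs_mult abs_divide add_divide_distrib algebra_simps)
        finally show "norm (infdist (\<gamma> t) (line Ai Bi Ci)) \<le> \<bar>r (T + t)\<bar> * M"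
          by (simp add: u_def)
      qed
    qed
  qed
qed



lemma map_poly_eval_add: "map_poly (\<lambda>c. poly c x) (p + q) = map_poly (\<lambda>c. poly c x) p + map_poly (\<lambda>c. poly c x) q"
  by (rule poly_eqI) (simp add: coeff_map_poly)
lemma map_poly_eval_mult: "map_poly (\<lambda>c. poly c x) (p * q) = map_poly (\<lambda>c. poly c x) p * map_poly (\<lambda>c. poly c x) q"
  by (rule poly_eqI) (simp add: coeff_map_poly coeff_mult poly_sum)
lemma eval2_add: "eval2 (p + q) x y = eval2 p x y + eval2 q x y"
  by (simp add: eval2_def map_poly_eval_add)
lemma eval2_mult: "eval2 (p * q) x y = eval2 p x y * eval2 q x y"
  by (simp add: eval2_def map_poly_eval_mult)
lemma eval2_lin: "eval2 (linpoly A B C) x y = A * x + B * y + C"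
  by (simp add: eval2_def linpoly_def map_poly_pCons algebra_simps)
lemma eval2_const: "eval2 [:c:] x y = poly c x"
  by (simp add: eval2_def map_poly_pCons)
lemma eval2_smult: "eval2 (smult c b) x y = poly c x * eval2 b x y"
proof -
  have "smult c b = [:c:] * b" by simp
  then show ?thesis by (simp only: eval2_mult eval2_const)
qed
lemma eval2_lin1: "eval2 [:a0, [:c:]:] x y = poly a0 x + c * y"
  by (simp add: eval2_def map_poly_pCons)

lemma deg1_form: "degree (p :: 'a::zero poly) \<le> 1 \<Longrightarrow> p = [:coeff p 0, coeff p 1:]"
  by (rule poly_eqI) (auto simp: coeff_pCons coeff_eq_0 split: nat.split)

lemma perp_iff:
  fixes A B w1 w2 X Y :: real
  assumes "(A, B) \<noteq> (0, 0)" "(w1, w2) \<noteq> (0, 0)" "A * w1 + B * w2 = 0"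
  shows "A * X + B * Y = 0 \<longleftrightarrow> X * w2 = Y * w1"
proof
  assume h: "A * X + B * Y = 0"
  have "A * (X * w2 - Y * w1) = w2 * (A * X + B * Y) - Y * (A * w1 + B * w2)" by (simp add: algebra_simps)
  then have 1: "A * (X * w2 - Y * w1) = 0" using h assms(3) by simp
  have "B * (X * w2 - Y * w1) = X * (A * w1 + B * w2) - w1 * (A * X + B * Y)" by (simp add: algebra_simps)
  then have 2: "B * (X * w2 - Y * w1) = 0" using h assms(3) by simp
  show "X * w2 = Y * w1" using 1 2 assms(1) by auto
next
  assume h: "X * w2 = Y * w1"
  have "w1 * (A * X + B * Y) = X * (A * w1 + B * w2) - B * (X * w2 - Y * w1)" by (simp add: algebra_simps)
  then have 1: "w1 * (A * X + B * Y) = 0" using h assms(3) by simp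
  have "w2 * (A * X + B * Y) = Y * (A * w1 + B * w2) + A * (X * w2 - Y * w1)" by (simp add: algebra_simps)
  then have 2: "w2 * (A * X + B * Y) = 0" using h assms(3) by simp
  show "A * X + B * Y = 0" using 1 2 assms(2) by auto
qed

context
  fixes A B C :: "nat \<Rightarrow> real"
  assumes nz: "\<And>i. i \<in> {1..4} \<Longrightarrow> (A i, B i) \<noteq> (0, 0)"
    and distinct: "\<And>i j. i \<in> {1..4} \<Longrightarrow> j \<in> {1..4} \<Longrightarrow> i \<noteq> j \<Longrightarrow>
                     line (A i) (B i) (C i) \<noteq> line (A j) (B j) (C j)"
    and np123: "\<And>i j. i \<in> {1..3} \<Longrightarrow> j \<in> {1..3} \<Longrightarrow> i \<noteq> j \<Longrightarrow>
                     \<not> parallel (A i) (B i) (A j) (B j)"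
begin

definition FF :: "real \<Rightarrow> real \<Rightarrow> real" where
  "FF x y = (A 1 * x + B 1 * y + C 1) * (A 2 * x + B 2 * y + C 2) * (A 3 * x + B 3 * y + C 3)
           + (A 4 * x + B 4 * y + C 4)"

lemma two_B: "i \<in> {1..3} \<Longrightarrow> j \<in> {1..3} \<Longrightarrow> i \<noteq> j \<Longrightarrow> B i \<noteq> 0 \<or> B j \<noteq> 0"
  using np123[of i j] by (auto simp: parallel_def)

lemma no_line:
  fixes p1 p2 w1 w2 :: real
  assumes w: "(w1, w2) \<noteq> (0, 0)" and z: "\<forall>t. FF (p1 + t * w1) (p2 + t * w2) = 0"
  shows False
proof -
  define s where "s i = A i * w1 + B i * w2" for i
  define k where "k i = A i * p1 + B i * p2 + C i" for i
  define P where "P i = [:k i, s i:]" for i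
  have polyP: "poly (P i) t = A i * (p1 + t * w1) + B i * (p2 + t * w2) + C i" for i t
    by (simp add: P_def s_def k_def algebra_simps)
  have "\<forall>t. poly (P 1 * P 2 * P 3 + P 4) t = 0" using z by (simp add: polyP FF_def)
  then have Z: "P 1 * P 2 * P 3 + P 4 = 0" using poly_all_0_iff_0 by blast
  have s2: "\<not> (s i = 0 \<and> s j = 0)" if "i \<in> {1..3}" "j \<in> {1..3}" "i \<noteq> j" for i j
  proof
    assume h: "s i = 0 \<and> s j = 0"
    have e1: "(A i * B j - A j * B i) * w1 = B j * s i - B i * s j" by (simp add: s_def algebra_simps)
    have e2: "(A i * B j - A j * B i) * w2 = A i * s j - A j * s i" by (simp add: s_def algebra_simps)
    have "A i * B j - A j * B i = 0" using e1 e2 h w by auto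
    then show False using np123[OF that] by (simp add: parallel_def)
  qed
  have dP4: "degree (P 4) \<le> 1" by (simp add: P_def)
  have degP: "degree (P i) = 1" "P i \<noteq> 0" if "s i \<noteq> 0" for i using that by (auto simp: P_def)
  show False
  proof (cases "s 1 \<noteq> 0 \<and> s 2 \<noteq> 0 \<and> s 3 \<noteq> 0")
    case True
    then have "degree (P 1 * P 2 * P 3) = 3" using degP by (simp add: degree_mult_eq)
    then have "degree (P 1 * P 2 * P 3 + P 4) = 3" using dP4 by (subst degree_add_eq_left) auto
    then show False using Z by simp
  next
    case False
    have e123: "{1..3::nat} = {1,2,3}" by auto
    from False obtain i where i: "i \<in> {1..3}" "s i = 0" unfolding e123 by auto
    obtain j l where jl: "j \<in> {1..3}" "l \<in> {1..3}" "j \<noteq> i" "l \<noteq> i" "j \<noteq> l"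
      "P 1 * P 2 * P 3 = P i * (P j * P l)"
    proof -
      have "i = 1 \<or> i = 2 \<or> i = 3" using i(1) unfolding e123 by auto
      then show thesis
      proof (elim disjE)
        assume "i = 1" then show thesis by (intro that[of 2 3]) (auto simp: mult_ac)
      next
        assume "i = 2" then show thesis by (intro that[of 1 3]) (auto simp: mult_ac)
      next
        assume "i = 3" then show thesis by (intro that[of 1 2]) (auto simp: mult_ac)
      qed
    qed
    have sj: "s j \<noteq> 0" "s l \<noteq> 0" using s2[of i j] s2[of i l] i jl by auto
    show False
    proof (cases "k i = 0")
      case False
      have "P i = [:k i:]" "P i \<noteq> 0" using i False by (auto simp: P_def)
      then have "degree (P 1 * P 2 * P 3) = 2" using jl(6) degP[OF sj(1)] degP[OF sj(2)] by (simp add: degree_mult_eq)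
      then have "degree (P 1 * P 2 * P 3 + P 4) = 2" using dP4 by (subst degree_add_eq_left) auto
      then show False using Z by simp
    next
      case True
      then have "P i = 0" using i by (simp add: P_def)
      then have "P 1 * P 2 * P 3 = 0" by (simp only: jl(6) mult_zero_left)
      then have "P 4 = 0" using Z by (metis add.left_neutral)
      then have s4: "s 4 = 0" "k 4 = 0" by (auto simp: P_def)
      have "line (A i) (B i) (C i) = line (A 4) (B 4) (C 4)"
      proof -
        have "q \<in> line (A m) (B m) (C m) \<longleftrightarrow> (fst q - p1) * w2 = (snd q - p2) * w1"
          if "m \<in> {1..4}" "s m = 0" "k m = 0" for m q
        proof -
          have "A m * fst q + B m * snd q + C m = A m * (fst q - p1) + B m * (snd q - p2)"
            using that(3) by (simp add: k_def algebra_simps)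
          then show ?thesis using perp_iff[OF nz[OF that(1)] w, of "fst q - p1" "snd q - p2"] that(2)
            by (simp add: line_def s_def)
        qed
        then show ?thesis using i True s4 by auto
      qed
      then show False using distinct[of i 4] i by auto
    qed
  qed
qed

lemma no_graph:
  fixes h :: "real poly"
  assumes z: "\<forall>x. FF x (poly h x) = 0"
  shows False
proof (cases "degree h \<le> 1")
  case True
  have "poly h t = coeff h 0 + t * coeff h 1" for t
    by (subst deg1_form[OF True]) (simp add: algebra_simps)
  then have "\<forall>t. FF (0 + t * 1) (coeff h 0 + t * coeff h 1) = 0" using z by simp
  then show False by (rule no_line[rotated]) simp
next
  case False
  define n where "n = degree h"
  have n2: "n \<ge> 2" using False by (simp add: n_def)
  define Q where "Q i = [:C i, A i:] + smult (B i) h" for i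
  have polyQ: "poly (Q i) x = A i * x + B i * poly h x + C i" for i x
    by (simp add: Q_def algebra_simps)
  have "\<forall>x. poly (Q 1 * Q 2 * Q 3 + Q 4) x = 0" using z by (simp add: polyQ FF_def)
  then have Z: "Q 1 * Q 2 * Q 3 + Q 4 = 0" using poly_all_0_iff_0 by blast
  have dlin: "degree [:c0, c1:] \<le> 1" for c0 c1 :: real by simp
  have dQn: "degree (Q i) = n" if "B i \<noteq> 0" for i
  proof -
    have "degree [:C i, A i:] < degree (smult (B i) h)" using that n2 dlin[of "C i" "A i"] by (simp add: n_def)
    then show ?thesis using that by (simp add: Q_def degree_add_eq_right n_def)
  qed
  have dQ1: "degree (Q i) \<ge> 1 \<and> Q i \<noteq> 0" if "i \<in> {1..3}" for i
  proof (cases "B i = 0")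
    case True
    then have "A i \<noteq> 0" using nz[of i] that by auto
    then show ?thesis using True by (simp add: Q_def)
  next
    case False
    then show ?thesis using dQn[OF False] n2 by auto
  qed
  have dQ4: "degree (Q 4) \<le> n"
    unfolding Q_def using degree_add_le[of "[:C 4, A 4:]" n "smult (B 4) h"] dlin[of "C 4" "A 4"] n2
    degree_smult_le[of "B 4" h] by (simp add: n_def)
  have nz3: "Q 1 \<noteq> 0" "Q 2 \<noteq> 0" "Q 3 \<noteq> 0" using dQ1[of 1] dQ1[of 2] dQ1[of 3] by auto
  have dprod: "degree (Q 1 * Q 2 * Q 3) = degree (Q 1) + degree (Q 2) + degree (Q 3)"
    using nz3 by (simp add: degree_mult_eq)
  have "degree (Q 1) + degree (Q 2) + degree (Q 3) \<ge> 2 * n + 1"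
    using two_B[of 1 2] two_B[of 1 3] two_B[of 2 3] dQ1[of 1] dQ1[of 2] dQ1[of 3] dQn[of 1] dQn[of 2] dQn[of 3]
    by (cases "B 1 = 0"; cases "B 2 = 0"; cases "B 3 = 0") auto
  then have "degree (Q 4) < degree (Q 1 * Q 2 * Q 3)" using dprod dQ4 n2 by linarith
  then have "degree (Q 1 * Q 2 * Q 3 + Q 4) = degree (Q 1 * Q 2 * Q 3)" by (rule degree_add_eq_left)
  then show False using Z \<open>degree (Q 4) < degree (Q 1 * Q 2 * Q 3)\<close> by simp
qed

lemma no_vertical:
  assumes z: "\<forall>y. FF x0 y = 0"
  shows False
proof -
  have "\<forall>t. FF (x0 + t * 0) (0 + t * 1) = 0" using z by simp
  then show False by (rule no_line[rotated]) simp
qed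

definition W :: "real poly poly \<Rightarrow> nat" where
  "W p = degree p + degree (lead_coeff p)"

lemma W_mult:
  assumes "p \<noteq> 0" "q \<noteq> 0" shows "W (p * q) = W p + W q"
proof -
  have l: "lead_coeff (p * q) = lead_coeff p * lead_coeff q" by (rule lead_coeff_mult)
  have "degree (lead_coeff p * lead_coeff q) = degree (lead_coeff p) + degree (lead_coeff q)"
    using assms by (intro degree_mult_eq) auto
  then show ?thesis unfolding W_def l using assms degree_mult_eq[OF assms] by simp
qed

lemma lin_facts:
  assumes "i \<in> {1..4}"
  shows "linpoly (A i) (B i) (C i) \<noteq> 0" "W (linpoly (A i) (B i) (C i)) = 1"
    "degree (linpoly (A i) (B i) (C i)) = (if B i = 0 then 0 else 1)"
  using nz[OF assms] by (auto simp: linpoly_def W_def)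

lemma unit_W0: "p \<noteq> 0 \<Longrightarrow> W p = 0 \<Longrightarrow> p dvd 1"
proof -
  assume p0: "p \<noteq> 0" and w: "W p = 0"
  then have d: "degree p = 0" "degree (lead_coeff p) = 0" by (auto simp: W_def)
  obtain c where c: "lead_coeff p = [:c:]" using degree_eq_zeroE[OF d(2)] by blast
  have "c \<noteq> 0" using c p0 by auto
  have "p = [:[:c:]:]" using degree_0_id[OF d(1)] c d(1) by simp
  moreover have "c dvd 1" using \<open>c \<noteq> 0\<close> by (intro dvdI[of _ _ "1/c"]) simp
  ultimately show "p dvd 1" by (simp add: is_unit_poly_iff)
qed

lemma W1_false:
  assumes fab: "\<forall>x y. FF x y = eval2 (a * b) x y" and a0: "a \<noteq> 0" and w: "W a = 1"
  shows False
proof -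
  have "(degree a = 0 \<and> degree (lead_coeff a) = 1) \<or> (degree a = 1 \<and> degree (lead_coeff a) = 0)"
    using w by (auto simp: W_def)
  then show False
  proof
    assume d: "degree a = 0 \<and> degree (lead_coeff a) = 1"
    define c where "c = lead_coeff a"
    have ac: "a = [:c:]" using degree_0_id[of a] d by (simp add: c_def)
    have dc: "degree c = 1" using d unfolding c_def by blast
    have c1: "c = [:coeff c 0, coeff c 1:]" using deg1_form[of c] dc by simp
    have c10: "coeff c 1 \<noteq> 0" using dc by (metis leading_coeff_0_iff one_neq_zero degree_0)
    define x0 where "x0 = - coeff c 0 / coeff c 1"
    have "poly c x0 = 0" using c10 by (subst c1) (simp add: x0_def)
    then have "\<forall>y. FF x0 y = 0" using fab by (simp add: eval2_mult ac eval2_const eval2_smult)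
    then show False by (rule no_vertical)
  next
    assume d: "degree a = 1 \<and> degree (lead_coeff a) = 0"
    have a1: "a = [:coeff a 0, coeff a 1:]" using deg1_form[of a] d by simp
    have "coeff a 1 = lead_coeff a" using d by simp
    then obtain c where c: "coeff a 1 = [:c:]" using degree_eq_zeroE[of "lead_coeff a"] d by metis
    have c0: "c \<noteq> 0" using c a0 d by (metis leading_coeff_0_iff pCons_0_0 \<open>coeff a 1 = lead_coeff a\<close> one_neq_zero)
    define h where "h = smult (- 1 / c) (coeff a 0)"
    have "eval2 a x (poly h x) = 0" for x
    proof -
      have a1': "a = [:coeff a 0, [:c:]:]" using a1 c by metis
      show ?thesis using c0 by (subst a1') (simp add: eval2_lin1 h_def)
    qed
    then have "\<forall>x. FF x (poly h x) = 0" using fab by (simp add: eval2_mult)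
    then show False by (rule no_graph)
  qed
qed

lemma irred:
  "irreducible (linpoly (A 1) (B 1) (C 1) * linpoly (A 2) (B 2) (C 2) * linpoly (A 3) (B 3) (C 3)
               + linpoly (A 4) (B 4) (C 4))" (is "irreducible ?f")
proof -
  define L where "L i = linpoly (A i) (B i) (C i)" for i
  have fL: "?f = L 1 * L 2 * L 3 + L 4" by (simp add: L_def)
  have evf: "eval2 ?f x y = FF x y" for x y
    by (simp add: eval2_add eval2_mult eval2_lin FF_def)
  have Lnz: "L i \<noteq> 0" if "i \<in> {1..4}" for i using lin_facts[OF that] by (simp add: L_def)
  have LW: "W (L i) = 1" if "i \<in> {1..4}" for i using lin_facts[OF that] by (simp add: L_def)
  have Ld: "degree (L i) = (if B i = 0 then 0 else 1)" if "i \<in> {1..4}" for i using lin_facts[OF that] by (simp add: L_def)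
  have nz3: "L 1 * L 2 * L 3 \<noteq> 0" using Lnz[of 1] Lnz[of 2] Lnz[of 3] by simp
  have d123: "degree (L 1 * L 2 * L 3) = degree (L 1) + degree (L 2) + degree (L 3)"
    using Lnz[of 1] Lnz[of 2] Lnz[of 3] by (simp add: degree_mult_eq)
  have dge2: "degree (L 1 * L 2 * L 3) \<ge> 2"
    unfolding d123 using Ld[of 1] Ld[of 2] Ld[of 3] two_B[of 1 2] two_B[of 1 3] two_B[of 2 3]
    by (cases "B 1 = 0"; cases "B 2 = 0"; cases "B 3 = 0") auto
  have d4: "degree (L 4) < degree (L 1 * L 2 * L 3)" using Ld[of 4] dge2 by auto
  have df: "degree ?f = degree (L 1 * L 2 * L 3)" unfolding fL using d4 by (rule degree_add_eq_left)
  have lf: "lead_coeff ?f = lead_coeff (L 1 * L 2 * L 3)" unfolding fL using d4 df fL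
    by (metis add.commute lead_coeff_add_le)
  have "W ?f = W (L 1 * L 2 * L 3)" by (metis W_def df lf)
  also have "\<dots> = 3"
    using W_mult[of "L 1 * L 2" "L 3"] W_mult[of "L 1" "L 2"] Lnz[of 1] Lnz[of 2] Lnz[of 3] LW[of 1] LW[of 2] LW[of 3]
    by simp
  finally have W3: "W ?f = 3" .
  have f0: "?f \<noteq> 0" using df dge2 by auto
  have fnu: "\<not> ?f dvd 1" using df dge2 by (auto simp: is_unit_poly_iff)
  show ?thesis unfolding irreducible_def
  proof (intro conjI f0 fnu allI impI)
    fix a b assume fab: "?f = a * b"
    have a0: "a \<noteq> 0" and b0: "b \<noteq> 0" using f0 fab by auto
    have Wab: "W a + W b = 3" using W3 fab W_mult[OF a0 b0] by simp
    have e1: "\<forall>x y. FF x y = eval2 (a * b) x y" using evf fab by simp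
    have e2: "\<forall>x y. FF x y = eval2 (b * a) x y" using evf fab by (simp add: mult.commute)
    show "a dvd 1 \<or> b dvd 1"
    proof (cases "W a = 0")
      case True then show ?thesis using unit_W0[OF a0] by simp
    next
      case False
      show ?thesis
      proof (cases "W b = 0")
        case True then show ?thesis using unit_W0[OF b0] by simp
      next
        case False
        then have "W a = 1 \<or> W b = 1" using \<open>W a \<noteq> 0\<close> Wab by linarith
        then show ?thesis using W1_false[OF e1 a0] W1_false[OF e2 b0] by blast
      qed
    qed
  qed
qed

end

theorem lemma4:
  fixes A B C :: "nat \<Rightarrow> real"
  assumes nz: "\<And>i. i \<in> {1..4} \<Longrightarrow> (A i, B i) \<noteq> (0, 0)"
    and distinct: "\<And>i j. i \<in> {1..4} \<Longrightarrow> j \<in> {1..4} \<Longrightarrow> i \<noteq> j \<Longrightarrow>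
                     line (A i) (B i) (C i) \<noteq> line (A j) (B j) (C j)"
    and np123: "\<And>i j. i \<in> {1..3} \<Longrightarrow> j \<in> {1..3} \<Longrightarrow> i \<noteq> j \<Longrightarrow>
                     \<not> parallel (A i) (B i) (A j) (B j)"
    and np41: "\<not> parallel (A 4) (B 4) (A 1) (B 1)"
    and np42: "\<not> parallel (A 4) (B 4) (A 2) (B 2)"
  defines "f \<equiv> linpoly (A 1) (B 1) (C 1) * linpoly (A 2) (B 2) (C 2) * linpoly (A 3) (B 3) (C 3)
               + linpoly (A 4) (B 4) (C 4)"
  shows "irreducible f \<and>
         (\<forall>i\<in>{1..3}. asymptotic_to (zero_set f) (line (A i) (B i) (C i)))"
proof
  show "irreducible f" unfolding f_def by (rule irred[OF nz distinct np123])
  define L where "L i p = A i * fst p + B i * snd p + C i" for i p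
  have zs: "zero_set f = {p. L 1 p * L 2 p * L 3 p + L 4 p = 0}"
    by (simp add: zero_set_def f_def eval2_add eval2_mult eval2_lin L_def)
  have dd: "A i * B j - A j * B i \<noteq> 0" if "i \<in> {1..3}" "j \<in> {1..3}" "i \<noteq> j" for i j
    using np123[OF that] by (simp add: parallel_def)
  have as1: "asymptotic_to (zero_set f) (line (A 1) (B 1) (C 1))"
    using asym_generic[OF dd[of 1 2] dd[of 1 3], of "C 1" "C 2" "C 3" "A 4" "B 4" "C 4"]
    unfolding zs L_def by simp
  have as2: "asymptotic_to (zero_set f) (line (A 2) (B 2) (C 2))"
  proof -
    have "zero_set f = {p. L 2 p * L 1 p * L 3 p + L 4 p = 0}" unfolding zs by (simp add: mult_ac)
    then show ?thesis
      using asym_generic[OF dd[of 2 1] dd[of 2 3], of "C 2" "C 1" "C 3" "A 4" "B 4" "C 4"]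
      unfolding L_def by simp
  qed
  have as3: "asymptotic_to (zero_set f) (line (A 3) (B 3) (C 3))"
  proof -
    have "zero_set f = {p. L 3 p * L 1 p * L 2 p + L 4 p = 0}" unfolding zs by (simp add: mult_ac)
    then show ?thesis
      using asym_generic[OF dd[of 3 1] dd[of 3 2], of "C 3" "C 1" "C 2" "A 4" "B 4" "C 4"]
      unfolding L_def by simp
  qed
  have e: "{1..3::nat} = {1,2,3}" by auto
  show "\<forall>i\<in>{1..3}. asymptotic_to (zero_set f) (line (A i) (B i) (C i))"
    unfolding e using as1 as2 as3 by auto
qed

end
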